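(* Let $A$ be an arbitrary modal algebra and let $S$ be a countable subset of $\mathcal{P}(A)$. Then the map $f:A\to K(\bar J_S(A))$ given by $f(x)=\{F\in Q_S(A)\mid x\in F\}$ is an injective homomorphism of modal algebras, and for every $X\in S$ such that $\bigwedge X$ exists in $A$, $f(\bigwedge X)=\bigcap_{x\in X}f(x)$.
   Context: A modal algebra is a structure $\langle A;\lor,\land,-,\Box,0,1\rangle$ whose reduct is a Boolean algebra and $\Box$ is an arbitrary unary operation. A homomorphism of modal algebras is a Boolean homomorphism commuting with $\Box$. A prime filter is a proper filter $F$ with $x\lor y\in F\Rightarrow x\in F$ or $y\in F$. For $S\subseteq\mathcal{P}(A)$, a Q-filter for $S$ is a prime filter $F$ such that for every $X\in S$, if $\bigwedge X$ exists in $A$ and $X\subseteq F$ then $\bigwedge X\in F$; $Q_S(A)$ is the set of these. For a neighborhood frame $Z=\langle C,\mathcal{V}\rangle$ ($C\neq\emptyset$, $\mathcal{V}:C\to\mathcal{P}(\mathcal{P}(C))$), $K(Z)=\langle\mathcal{P}(C);\cup,\cap,C\setminus-,\Box_Z,\emptyset,C\rangle$ with $\Box_Z X=\{c\mid X\in\mathcal{V}(c)\}$. $\bar J_S(A)=\langle Q_S(A),\bar{\mathcal{V}}_A\rangle$ with $\bar{\mathcal{V}}_A(F)=\{\{G\in Q_S(A)\mid x\in G\}\mid x\in A,\ \Box x\in F\}$. *)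

theory Defs
  imports Main "HOL-Library.Countable_Set"
begin

text \<open>A modal algebra is modelled as a Boolean algebra type 'a together with an
arbitrary unary operation box on it.\<close>

definition is_filter :: "'a::boolean_algebra set \<Rightarrow> bool" where
  "is_filter F \<longleftrightarrow> top \<in> F \<and> (\<forall>x\<in>F. \<forall>y. x \<le> y \<longrightarrow> y \<in> F) \<and>
     (\<forall>x\<in>F. \<forall>y\<in>F. inf x y \<in> F)"

definition is_prime_filter :: "'a::boolean_algebra set \<Rightarrow> bool" where
  "is_prime_filter F \<longleftrightarrow> is_filter F \<and> F \<noteq> UNIV \<and>
     (\<forall>x y. sup x y \<in> F \<longrightarrow> x \<in> F \<or> y \<in> F)"

definition is_meet :: "'a::boolean_algebra set \<Rightarrow> 'a \<Rightarrow> bool" where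
  "is_meet X m \<longleftrightarrow> (\<forall>x\<in>X. m \<le> x) \<and> (\<forall>l. (\<forall>x\<in>X. l \<le> x) \<longrightarrow> l \<le> m)"

definition Q_filters :: "'a::boolean_algebra set set \<Rightarrow> 'a set set" where
  "Q_filters S = {F. is_prime_filter F \<and>
     (\<forall>X\<in>S. \<forall>m. is_meet X m \<and> X \<subseteq> F \<longrightarrow> m \<in> F)}"

definition Jbar_nbhd :: "('a::boolean_algebra \<Rightarrow> 'a) \<Rightarrow> 'a set set \<Rightarrow> 'a set \<Rightarrow> 'a set set set" where
  "Jbar_nbhd box S F = {{G \<in> Q_filters S. x \<in> G} | x. box x \<in> F}"

text \<open>Box operation of the complex algebra K(Z) of a neighbourhood frame Z = (C, V).\<close>
definition K_box :: "'c set \<Rightarrow> ('c \<Rightarrow> 'c set set) \<Rightarrow> 'c set \<Rightarrow> 'c set" where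
  "K_box C V X = {c \<in> C. X \<in> V c}"

text \<open>f is a homomorphism of modal algebras from (A, box) into K(C, V),
  whose carrier is the powerset of C.\<close>
definition modal_hom_to_K ::
  "('a::boolean_algebra \<Rightarrow> 'a) \<Rightarrow> 'c set \<Rightarrow> ('c \<Rightarrow> 'c set set) \<Rightarrow> ('a \<Rightarrow> 'c set) \<Rightarrow> bool" where
  "modal_hom_to_K box C V f \<longleftrightarrow>
     (\<forall>x. f x \<subseteq> C) \<and>
     (\<forall>x y. f (sup x y) = f x \<union> f y) \<and>
     (\<forall>x y. f (inf x y) = f x \<inter> f y) \<and>
     (\<forall>x. f (- x) = C - f x) \<and>
     f bot = {} \<and> f top = C \<and>
     (\<forall>x. f (box x) = K_box C V (f x))"

end

theory Submission
  imports Defs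
begin

lemma pf_bot: "is_prime_filter F \<Longrightarrow> bot \<notin> F"
  unfolding is_prime_filter_def is_filter_def by (metis UNIV_eq_I bot.extremum)

lemma pf_top: "is_prime_filter F \<Longrightarrow> top \<in> F"
  unfolding is_prime_filter_def is_filter_def by blast

lemma pf_up: "is_prime_filter F \<Longrightarrow> x \<in> F \<Longrightarrow> x \<le> y \<Longrightarrow> y \<in> F"
  unfolding is_prime_filter_def is_filter_def by blast

lemma pf_inf: "is_prime_filter F \<Longrightarrow> inf x y \<in> F \<longleftrightarrow> x \<in> F \<and> y \<in> F"
  unfolding is_prime_filter_def is_filter_def by (meson inf.cobounded1 inf.cobounded2)

lemma pf_sup: "is_prime_filter F \<Longrightarrow> sup x y \<in> F \<longleftrightarrow> x \<in> F \<or> y \<in> F"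
proof
  assume "is_prime_filter F" "sup x y \<in> F"
  then show "x \<in> F \<or> y \<in> F" unfolding is_prime_filter_def by blast
next
  assume F: "is_prime_filter F" and "x \<in> F \<or> y \<in> F"
  then show "sup x y \<in> F" using pf_up[OF F, of x "sup x y"] pf_up[OF F, of y "sup x y"] by auto
qed

lemma pf_compl: "is_prime_filter F \<Longrightarrow> - x \<in> F \<longleftrightarrow> x \<notin> F"
proof -
  assume F: "is_prime_filter F"
  have "sup x (- x) \<in> F" using pf_top[OF F] by simp
  hence "x \<in> F \<or> - x \<in> F" using pf_sup[OF F] by blast
  moreover have "\<not> (x \<in> F \<and> - x \<in> F)" using pf_inf[OF F, of x "-x"] pf_bot[OF F] by simp
  ultimately show ?thesis by blast
qed

lemma fil_top: "is_filter F \<Longrightarrow> top \<in> F" unfolding is_filter_def by blast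
lemma fil_up: "is_filter F \<Longrightarrow> x \<in> F \<Longrightarrow> x \<le> y \<Longrightarrow> y \<in> F" unfolding is_filter_def by blast
lemma fil_inf: "is_filter F \<Longrightarrow> x \<in> F \<Longrightarrow> y \<in> F \<Longrightarrow> inf x y \<in> F" unfolding is_filter_def by blast

definition gen :: "'a::boolean_algebra set \<Rightarrow> 'a \<Rightarrow> 'a set" where
  "gen M x = {z. \<exists>w\<in>M. inf w x \<le> z}"

lemma gen_filter:
  assumes M: "is_filter M" shows "is_filter (gen M x)"
  unfolding is_filter_def
proof (intro conjI ballI allI impI)
  show "top \<in> gen M x" using fil_top[OF M] unfolding gen_def by auto
next
  fix a b assume "a \<in> gen M x" "a \<le> b"
  then show "b \<in> gen M x" unfolding gen_def by (blast intro: order_trans)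
next
  fix a b
  assume "a \<in> gen M x" "b \<in> gen M x"
  then obtain w1 w2 where w: "w1 \<in> M" "w2 \<in> M" "inf w1 x \<le> a" "inf w2 x \<le> b"
    unfolding gen_def by blast
  have "inf (inf w1 w2) x \<le> inf a b" using w(3,4)
    by (meson inf_le1 inf_le2 le_inf_iff order_trans)
  moreover have "inf w1 w2 \<in> M" using fil_inf[OF M w(1,2)] .
  ultimately show "inf a b \<in> gen M x" unfolding gen_def by blast
qed

lemma ultra_ext:
  assumes G: "is_filter G" "bot \<notin> G"
  shows "\<exists>U. is_prime_filter U \<and> G \<subseteq> U"
proof -
  define P where "P = {F. is_filter F \<and> bot \<notin> F \<and> G \<subseteq> F}"
  have "\<forall>C\<in>chains P. \<exists>U\<in>P. \<forall>X\<in>C. X \<subseteq> U"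
  proof
    fix C assume C: "C \<in> chains P"
    show "\<exists>U\<in>P. \<forall>X\<in>C. X \<subseteq> U"
    proof (cases "C = {}")
      case True then show ?thesis using G unfolding P_def by auto
    next
      case False
      have CP: "C \<subseteq> P" and ch: "\<forall>X\<in>C. \<forall>Y\<in>C. X \<subseteq> Y \<or> Y \<subseteq> X"
        using C unfolding chains_def chain_subset_def by auto
      have CF: "X \<in> C \<Longrightarrow> is_filter X" for X using CP unfolding P_def by blast
      have "is_filter (\<Union>C)"
        unfolding is_filter_def
      proof (intro conjI ballI allI impI)
        obtain X where "X \<in> C" using False by blast
        then show "top \<in> \<Union>C" using CF[of X] fil_top by blast
      next
        fix x y assume "x \<in> \<Union>C" "x \<le> y"
        then obtain X where "X \<in> C" "x \<in> X" by blast
        then show "y \<in> \<Union>C" using CF[of X] fil_up[of X x y] \<open>x \<le> y\<close> by blast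
      next
        fix x y assume "x \<in> \<Union>C" "y \<in> \<Union>C"
        then obtain X Y where XY: "X \<in> C" "Y \<in> C" "x \<in> X" "y \<in> Y" by auto
        show "inf x y \<in> \<Union>C"
        proof (cases "X \<subseteq> Y")
          case True then show ?thesis using XY CF[of Y] fil_inf[of Y x y] by blast
        next
          case False then have "Y \<subseteq> X" using ch XY by blast
          then show ?thesis using XY CF[of X] fil_inf[of X x y] by blast
        qed
      qed
      moreover have "bot \<notin> \<Union>C" "G \<subseteq> \<Union>C" using CP False unfolding P_def by auto
      ultimately show ?thesis unfolding P_def by blast
    qed
  qed
  from Zorn_Lemma2[OF this] obtain M where M: "M \<in> P" and mx: "\<forall>X\<in>P. M \<subseteq> X \<longrightarrow> X = M"
    by blast
  have Mf: "is_filter M" "bot \<notin> M" "G \<subseteq> M" using M unfolding P_def by auto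
  have ultra: "x \<in> M \<or> - x \<in> M" for x
  proof (rule ccontr)
    assume n: "\<not> (x \<in> M \<or> - x \<in> M)"
    have sub: "M \<subseteq> gen M x" unfolding gen_def by (auto intro: order_trans[OF inf_le1])
    have xin: "x \<in> gen M x" using fil_top[OF Mf(1)] unfolding gen_def by force
    have "bot \<notin> gen M x"
    proof
      assume "bot \<in> gen M x"
      then obtain w where w: "w \<in> M" "inf w x = bot" unfolding gen_def by (auto simp: bot_unique)
      then have "w \<le> - x" by (simp add: inf_shunt)
      then have "- x \<in> M" using w Mf(1) fil_up by blast
      then show False using n by blast
    qed
    then have "gen M x \<in> P" using gen_filter[OF Mf(1)] sub Mf unfolding P_def by blast
    then have "gen M x = M" using mx sub by blast
    then show False using xin n by blast
  qed
  have "is_prime_filter M"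
    unfolding is_prime_filter_def
  proof (intro conjI allI impI)
    show "is_filter M" by fact
    show "M \<noteq> UNIV" using Mf by blast
    fix x y assume s: "sup x y \<in> M"
    show "x \<in> M \<or> y \<in> M"
    proof (rule ccontr)
      assume "\<not> (x \<in> M \<or> y \<in> M)"
      then have "- x \<in> M" "- y \<in> M" using ultra by blast+
      then have "inf (inf (- x) (- y)) (sup x y) \<in> M" using s Mf(1) fil_inf by blast
      moreover have "inf (inf (- x) (- y)) (sup x y) = bot"
        by (simp add: inf_sup_distrib1 inf_shunt)
      ultimately show False using Mf by simp
    qed
  qed
  then show ?thesis using Mf by blast
qed

definition step :: "'a::boolean_algebra set \<Rightarrow> 'a \<Rightarrow> 'a" where
  "step X a = (if \<exists>m. is_meet X m \<and> \<not> a \<le> m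
     then inf a (- (SOME x. x \<in> X \<and> \<not> a \<le> x)) else a)"

lemma step_props:
  assumes "a \<noteq> bot"
  shows "step X a \<le> a" "step X a \<noteq> bot"
    "\<forall>m. is_meet X m \<longrightarrow> step X a \<le> m \<or> (\<exists>x\<in>X. step X a \<le> - x)"
proof -
  have "step X a \<le> a \<and> step X a \<noteq> bot \<and>
    (\<forall>m. is_meet X m \<longrightarrow> step X a \<le> m \<or> (\<exists>x\<in>X. step X a \<le> - x))"
  proof (cases "\<exists>m. is_meet X m \<and> \<not> a \<le> m")
    case True
    then obtain m where m: "is_meet X m" "\<not> a \<le> m" by blast
    have "\<exists>x. x \<in> X \<and> \<not> a \<le> x" using m unfolding is_meet_def by blast
    then have x: "(SOME x. x \<in> X \<and> \<not> a \<le> x) \<in> X \<and> \<not> a \<le> (SOME x. x \<in> X \<and> \<not> a \<le> x)"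
      by (rule someI_ex)
    define x where "x = (SOME x. x \<in> X \<and> \<not> a \<le> x)"
    have sx: "step X a = inf a (- x)" unfolding step_def x_def using True by simp
    have "inf a (- x) \<noteq> bot" using x unfolding x_def[symmetric] by (simp add: inf_shunt)
    moreover have "step X a \<le> - x" "step X a \<le> a" using sx by simp_all
    moreover have "x \<in> X" using x unfolding x_def[symmetric] by blast
    moreover have "step X a \<noteq> bot" using sx calculation(1) by simp
    ultimately show ?thesis by blast
  next
    case False
    then have "step X a = a" unfolding step_def by (simp only: if_False)
    then show ?thesis using False assms by auto
  qed
  then show "step X a \<le> a" "step X a \<noteq> bot"
    "\<forall>m. is_meet X m \<longrightarrow> step X a \<le> m \<or> (\<exists>x\<in>X. step X a \<le> - x)" by auto
qed

lemma RS:
  fixes S :: "'a::boolean_algebra set set"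
  assumes "countable S" "a \<noteq> bot"
  shows "\<exists>F\<in>Q_filters S. a \<in> F"
proof -
  define X where "X = from_nat_into S"
  define s where "s = rec_nat a (\<lambda>n b. step (X n) b)"
  have s0: "s 0 = a" and sS: "s (Suc n) = step (X n) (s n)" for n unfolding s_def by auto
  have nz: "s n \<noteq> bot" for n
    by (induction n) (auto simp: s0 sS assms step_props)
  have dec: "s (Suc n) \<le> s n" for n using step_props(1)[OF nz] sS by simp
  have mono: "n \<le> k \<Longrightarrow> s k \<le> s n" for n k using lift_Suc_antimono_le[of s, OF dec] by blast
  have key: "\<forall>m. is_meet (X n) m \<longrightarrow> s (Suc n) \<le> m \<or> (\<exists>x\<in>X n. s (Suc n) \<le> - x)" for n
    using step_props(3)[OF nz] sS by simp
  define G where "G = {y. \<exists>n. s n \<le> y}"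
  have "is_filter G" unfolding is_filter_def G_def
  proof (intro conjI ballI allI impI)
    show "top \<in> {y. \<exists>n. s n \<le> y}" by simp
  next
    fix x y assume "x \<in> {y. \<exists>n. s n \<le> y}" "x \<le> y"
    then show "y \<in> {y. \<exists>n. s n \<le> y}" by (auto intro: order_trans)
  next
    fix x y assume "x \<in> {y. \<exists>n. s n \<le> y}" "y \<in> {y. \<exists>n. s n \<le> y}"
    then obtain n k where "s n \<le> x" "s k \<le> y" by auto
    then have "s (max n k) \<le> inf x y"
      using mono[of n "max n k"] mono[of k "max n k"] by (simp add: le_infI order_trans)
    then show "inf x y \<in> {y. \<exists>n. s n \<le> y}" by blast
  qed
  moreover have "bot \<notin> G" unfolding G_def using nz by (auto simp: bot_unique)
  ultimately obtain U where U: "is_prime_filter U" "G \<subseteq> U" using ultra_ext by blast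
  have aU: "a \<in> U" using U s0 unfolding G_def by auto
  have "U \<in> Q_filters S" unfolding Q_filters_def
  proof (intro CollectI conjI ballI allI impI)
    show "is_prime_filter U" by fact
    fix Y m assume Y: "Y \<in> S" and mY: "is_meet Y m \<and> Y \<subseteq> U"
    obtain n where n: "Y = X n" using subset_range_from_nat_into[OF assms(1)] Y
      unfolding X_def by blast
    from key[of n] mY n have "s (Suc n) \<le> m \<or> (\<exists>x\<in>Y. s (Suc n) \<le> - x)" by blast
    then show "m \<in> U"
    proof
      assume "s (Suc n) \<le> m" then show ?thesis using U unfolding G_def by blast
    next
      assume "\<exists>x\<in>Y. s (Suc n) \<le> - x"
      then obtain x where "x \<in> Y" "s (Suc n) \<le> - x" by blast
      then have "- x \<in> U" "x \<in> U" using U mY unfolding G_def by blast+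
      then show ?thesis using pf_compl[OF U(1)] by blast
    qed
  qed
  then show ?thesis using aU by blast
qed

theorem mainTheorem7:
  fixes box :: "'a::boolean_algebra \<Rightarrow> 'a" and S :: "'a set set"
  assumes "countable S"
  defines "f \<equiv> (\<lambda>x. {F \<in> Q_filters S. x \<in> F})"
  shows "modal_hom_to_K box (Q_filters S) (Jbar_nbhd box S) f \<and> inj f \<and>
         (\<forall>X\<in>S. \<forall>m. is_meet X m \<longrightarrow> f m = Q_filters S \<inter> (\<Inter>x\<in>X. f x))"
proof -
  have pf: "F \<in> Q_filters S \<Longrightarrow> is_prime_filter F" for F unfolding Q_filters_def by blast
  have sep: "\<not> x \<le> y \<Longrightarrow> f x \<noteq> f y" for x y
  proof -
    assume "\<not> x \<le> y"
    then have "inf x (- y) \<noteq> bot" by (simp add: inf_shunt)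
    then obtain F where F: "F \<in> Q_filters S" "inf x (- y) \<in> F" using RS[OF assms(1)] by blast
    then have "x \<in> F" "y \<notin> F" using pf_inf[OF pf] pf_compl[OF pf] by blast+
    then show ?thesis using F unfolding f_def by blast
  qed
  have inj: "inj f"
  proof (rule injI)
    fix x y assume "f x = f y"
    then have "x \<le> y" "y \<le> x" using sep by metis+
    then show "x = y" by simp
  qed
  have hom: "modal_hom_to_K box (Q_filters S) (Jbar_nbhd box S) f"
    unfolding modal_hom_to_K_def
  proof (intro conjI allI)
    show "f x \<subseteq> Q_filters S" for x unfolding f_def by blast
    show "f (sup x y) = f x \<union> f y" for x y unfolding f_def using pf_sup[OF pf] by blast
    show "f (inf x y) = f x \<inter> f y" for x y unfolding f_def using pf_inf[OF pf] by blast
    show "f (- x) = Q_filters S - f x" for x unfolding f_def using pf_compl[OF pf] by blast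
    show "f bot = {}" unfolding f_def using pf_bot[OF pf] by blast
    show "f top = Q_filters S" unfolding f_def using pf_top[OF pf] by blast
    show "f (box x) = K_box (Q_filters S) (Jbar_nbhd box S) (f x)" for x
    proof -
      have "f x \<in> Jbar_nbhd box S F \<longleftrightarrow> box x \<in> F" for F
      proof
        assume "f x \<in> Jbar_nbhd box S F"
        then obtain y where "f x = f y" "box y \<in> F"
          unfolding Jbar_nbhd_def f_def by blast
        then show "box x \<in> F" using inj by (simp add: inj_eq)
      next
        assume "box x \<in> F" then show "f x \<in> Jbar_nbhd box S F"
          unfolding Jbar_nbhd_def f_def by blast
      qed
      then show ?thesis unfolding K_box_def f_def by blast
    qed
  qed
  have meet: "\<forall>X\<in>S. \<forall>m. is_meet X m \<longrightarrow> f m = Q_filters S \<inter> (\<Inter>x\<in>X. f x)"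
  proof (intro ballI allI impI)
    fix X m assume X: "X \<in> S" and m: "is_meet X m"
    show "f m = Q_filters S \<inter> (\<Inter>x\<in>X. f x)"
    proof
      show "f m \<subseteq> Q_filters S \<inter> (\<Inter>x\<in>X. f x)"
        using m pf_up[OF pf] unfolding f_def is_meet_def by blast
      show "Q_filters S \<inter> (\<Inter>x\<in>X. f x) \<subseteq> f m"
      proof
        fix F assume "F \<in> Q_filters S \<inter> (\<Inter>x\<in>X. f x)"
        then have "F \<in> Q_filters S" "X \<subseteq> F" unfolding f_def by auto
        then show "F \<in> f m" using X m unfolding Q_filters_def f_def by blast
      qed
    qed
  qed
  show ?thesis using hom inj meet by blast
qed

end
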